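(* Let $G$ be a $(P_7, C_4, \text{gem})$-free graph, let $v_1v_2\cdots v_7v_1$ be a $7$-hole of $G$, $A=\{v_1,\dots,v_7\}$, indices modulo 7. For each $i$ let $X_i=\{x\in N(A): N(x)\cap A=\{v_i,v_{i+3}\}\}$, $Y_i=\{x\in N(A): N(x)\cap A=\{v_i,v_{i+1},v_{i+2}\}\}$, $Z_i=\{x\in N(A): N(x)\cap A=\{v_i,v_{i+3},v_{i+4}\}\}$. Then: (a) $N(A)=\bigcup_{i=1}^7(X_i\cup Y_i\cup Z_i)$; (b) for each $i$, $X_i\cup Z_i$ and $Y_i$ are cliques; (c) $Y_i$ is complete to $Y_{i+1}\cup Y_{i+6}$ and anticomplete to $Y_{i+2}\cup Y_{i+3}\cup Y_{i+4}\cup Y_{i+5}$; (d) either $X_i=\emptyset$ or $X_{i+2}\cup X_{i+5}=\emptyset$; and $X_i$ is anticomplete to $X_{i+1}\cup X_{i+3}\cup X_{i+4}\cup X_{i+6}$; (e) $X_i$ is complete to $Y_{i+2}\cup Y_{i+6}$ and anticomplete to $Y_i\cup Y_{i+1}\cup Y_{i+3}\cup Y_{i+4}\cup Y_{i+5}$; (f) either $Z_i=\emptyset$ or $Z_{i+3}\cup Z_{i+4}=\emptyset$; and $Z_i$ is anticomplete to $Z_{i+1}\cup Z_{i+2}\cup Z_{i+5}\cup Z_{i+6}$; (g) either $Z_i=\emptyset$ or $X_i\cup X_{i+4}\cup X_{i+6}=\emptyset$; and $Z_i$ is anticomplete to $X_{i+1}\cup X_{i+2}\cup X_{i+3}\cup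 X_{i+5}$; (h) $Z_i$ is complete to $Y_{i+2}\cup Y_{i+3}\cup Y_{i+6}$ and anticomplete to $Y_i\cup Y_{i+1}\cup Y_{i+4}\cup Y_{i+5}$.
   Context: All graphs are finite and simple. $G$ is $H$-free if it has no induced subgraph isomorphic to $H$; $P_t$, $C_t$ are the path and cycle on $t$ vertices; a gem is an induced $P_4$ plus a vertex adjacent to all its four vertices. A $k$-hole is an induced cycle of length $k$. For $X\subseteq V(G)$, $N(X)$ is the set of vertices outside $X$ with a neighbour in $X$. A set $S$ is complete (anticomplete) to $T$ if every vertex of $S$ is adjacent (non-adjacent) to every vertex of $T$. *)

theory Defs
  imports Main
begin

definition simple_graph :: "'a set \<Rightarrow> ('a \<Rightarrow> 'a \<Rightarrow> bool) \<Rightarrow> bool" where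
  "simple_graph V E \<longleftrightarrow> finite V \<and> (\<forall>x y. E x y \<longrightarrow> x \<in> V \<and> y \<in> V)
     \<and> (\<forall>x y. E x y \<longrightarrow> E y x) \<and> (\<forall>x. \<not> E x x)"

definition induced_copy :: "'a set \<Rightarrow> ('a \<Rightarrow> 'a \<Rightarrow> bool) \<Rightarrow> nat \<Rightarrow> (nat \<Rightarrow> nat \<Rightarrow> bool) \<Rightarrow> (nat \<Rightarrow> 'a) \<Rightarrow> bool" where
  "induced_copy V E k H f \<longleftrightarrow> f ` {..<k} \<subseteq> V \<and> inj_on f {..<k}
     \<and> (\<forall>i<k. \<forall>j<k. E (f i) (f j) \<longleftrightarrow> H i j)"

definition H_free :: "'a set \<Rightarrow> ('a \<Rightarrow> 'a \<Rightarrow> bool) \<Rightarrow> nat \<Rightarrow> (nat \<Rightarrow> nat \<Rightarrow> bool) \<Rightarrow> bool" where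
  "H_free V E k H \<longleftrightarrow> \<not> (\<exists>f. induced_copy V E k H f)"

definition path_adj :: "nat \<Rightarrow> nat \<Rightarrow> bool" where
  "path_adj i j \<longleftrightarrow> i + 1 = j \<or> j + 1 = i"

definition cycle_adj :: "nat \<Rightarrow> nat \<Rightarrow> nat \<Rightarrow> bool" where
  "cycle_adj t i j \<longleftrightarrow> i \<noteq> j \<and> (j = (i + 1) mod t \<or> i = (j + 1) mod t)"

definition gem_adj :: "nat \<Rightarrow> nat \<Rightarrow> bool" where
  "gem_adj i j \<longleftrightarrow> path_adj i j \<or> (i \<noteq> j \<and> (i = 4 \<or> j = 4))"

definition nbhd :: "'a set \<Rightarrow> ('a \<Rightarrow> 'a \<Rightarrow> bool) \<Rightarrow> 'a set \<Rightarrow> 'a set" where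
  "nbhd V E X = {y \<in> V - X. \<exists>x\<in>X. E x y}"

definition is_clique :: "'a set \<Rightarrow> ('a \<Rightarrow> 'a \<Rightarrow> bool) \<Rightarrow> 'a set \<Rightarrow> bool" where
  "is_clique V E S \<longleftrightarrow> S \<subseteq> V \<and> (\<forall>x\<in>S. \<forall>y\<in>S. x \<noteq> y \<longrightarrow> E x y)"

definition complete_to :: "('a \<Rightarrow> 'a \<Rightarrow> bool) \<Rightarrow> 'a set \<Rightarrow> 'a set \<Rightarrow> bool" where
  "complete_to E S T \<longleftrightarrow> (\<forall>s\<in>S. \<forall>t\<in>T. E s t)"

definition anticomplete_to :: "('a \<Rightarrow> 'a \<Rightarrow> bool) \<Rightarrow> 'a set \<Rightarrow> 'a set \<Rightarrow> bool" where
  "anticomplete_to E S T \<longleftrightarrow> (\<forall>s\<in>S. \<forall>t\<in>T. \<not> E s t)"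

(* The 7-hole is v 0, ..., v 6 (the paper's v_1..v_7, shifted); indices are taken mod 7. *)
definition hole7 :: "'a set \<Rightarrow> ('a \<Rightarrow> 'a \<Rightarrow> bool) \<Rightarrow> (nat \<Rightarrow> 'a) \<Rightarrow> bool" where
  "hole7 V E v \<longleftrightarrow> induced_copy V E 7 (cycle_adj 7) v"

definition hv :: "(nat \<Rightarrow> 'a) \<Rightarrow> nat \<Rightarrow> 'a" where
  "hv v i = v (i mod 7)"

definition holeA :: "(nat \<Rightarrow> 'a) \<Rightarrow> 'a set" where
  "holeA v = v ` {..<7}"

definition Xset :: "'a set \<Rightarrow> ('a \<Rightarrow> 'a \<Rightarrow> bool) \<Rightarrow> (nat \<Rightarrow> 'a) \<Rightarrow> nat \<Rightarrow> 'a set" where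
  "Xset V E v i = {x \<in> nbhd V E (holeA v).
      nbhd V E {x} \<inter> holeA v = {hv v i, hv v (i + 3)}}"

definition Yset :: "'a set \<Rightarrow> ('a \<Rightarrow> 'a \<Rightarrow> bool) \<Rightarrow> (nat \<Rightarrow> 'a) \<Rightarrow> nat \<Rightarrow> 'a set" where
  "Yset V E v i = {x \<in> nbhd V E (holeA v).
      nbhd V E {x} \<inter> holeA v = {hv v i, hv v (i + 1), hv v (i + 2)}}"

definition Zset :: "'a set \<Rightarrow> ('a \<Rightarrow> 'a \<Rightarrow> bool) \<Rightarrow> (nat \<Rightarrow> 'a) \<Rightarrow> nat \<Rightarrow> 'a set" where
  "Zset V E v i = {x \<in> nbhd V E (holeA v).
      nbhd V E {x} \<inter> holeA v = {hv v i, hv v (i + 3), hv v (i + 4)}}"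

end

theory Submission
  imports Defs
begin

definition pat :: "nat list \<Rightarrow> nat list \<Rightarrow> bool \<Rightarrow> nat \<Rightarrow> nat \<Rightarrow> bool" where
 "pat L1 L2 e a b = (if a < 7 \<and> b < 7 then cycle_adj 7 a b
    else if a = 7 \<and> b < 7 then b \<in> set L1
    else if b = 7 \<and> a < 7 then a \<in> set L1
    else if a = 8 \<and> b < 7 then b \<in> set L2
    else if b = 8 \<and> a < 7 then a \<in> set L2
    else if (a = 7 \<and> b = 8) \<or> (a = 8 \<and> b = 7) then e else False)"

definition embeds :: "nat \<Rightarrow> nat \<Rightarrow> (nat \<Rightarrow> nat \<Rightarrow> bool) \<Rightarrow> (nat \<Rightarrow> nat \<Rightarrow> bool) \<Rightarrow> nat list \<Rightarrow> bool" where
 "embeds n k H P ms \<longleftrightarrow> length ms = k \<and> list_all (\<lambda>a. a < n) ms \<and> distinct ms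
    \<and> list_all (\<lambda>i. list_all (\<lambda>j. P (ms!i) (ms!j) = H i j) [0..<k]) [0..<k]"

definition check_any :: "nat \<Rightarrow> (nat \<Rightarrow> nat \<Rightarrow> bool) \<Rightarrow> nat list \<Rightarrow> bool" where
 "check_any n P ms \<longleftrightarrow> embeds n 7 path_adj P ms \<or> embeds n 4 (cycle_adj 4) P ms \<or> embeds n 5 gem_adj P ms"

definition tlst :: "nat \<Rightarrow> nat \<Rightarrow> nat list" where
 "tlst c i = (if c = 0 then [i mod 7, (i+3) mod 7]
    else if c = 1 then [i mod 7, (i+1) mod 7, (i+2) mod 7]
    else [i mod 7, (i+3) mod 7, (i+4) mod 7])"

definition ty :: "nat \<Rightarrow> nat \<Rightarrow> nat list" where
 "ty c i = filter (\<lambda>a. a \<in> set (tlst c i)) [0..<7]"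

definition allowed :: "nat list list" where
 "allowed = map (ty 0) [0..<7] @ map (ty 1) [0..<7] @ map (ty 2) [0..<7]"

definition tab1 :: "(nat list \<times> nat list) list" where
 "tab1 = [([0], [2,3,4,5,6,0,7]) ,
  ([1], [3,4,5,6,0,1,7]) ,
  ([0,1], [2,3,4,5,6,0,7]) ,
  ([2], [0,6,5,4,3,2,7]) ,
  ([0,2], [0,1,2,7]) ,
  ([1,2], [0,6,5,4,3,2,7]) ,
  ([3], [1,0,6,5,4,3,7]) ,
  ([1,3], [1,2,3,7]) ,
  ([0,1,3], [1,2,3,7]) ,
  ([2,3], [1,0,6,5,4,3,7]) ,
  ([0,2,3], [0,1,2,7]) ,
  ([0,1,2,3], [0,1,2,3,7]) ,
  ([4], [2,1,0,6,5,4,7]) ,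
  ([2,4], [2,3,4,7]) ,
  ([0,2,4], [0,1,2,7]) ,
  ([1,2,4], [2,3,4,7]) ,
  ([0,1,2,4], [2,3,4,7]) ,
  ([3,4], [2,1,0,6,5,4,7]) ,
  ([1,3,4], [1,2,3,7]) ,
  ([0,1,3,4], [1,2,3,7]) ,
  ([0,2,3,4], [0,1,2,7]) ,
  ([1,2,3,4], [1,2,3,4,7]) ,
  ([0,1,2,3,4], [0,1,2,3,7]) ,
  ([5], [0,1,2,3,4,5,7]) ,
  ([0,5], [0,6,5,7]) ,
  ([0,1,5], [0,6,5,7]) ,
  ([0,2,5], [0,1,2,7]) ,
  ([0,1,2,5], [0,6,5,7]) ,
  ([3,5], [3,4,5,7]) ,
  ([0,3,5], [0,6,5,7]) ,
  ([1,3,5], [1,2,3,7]) ,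
  ([0,1,3,5], [0,6,5,7]) ,
  ([2,3,5], [3,4,5,7]) ,
  ([0,2,3,5], [0,1,2,7]) ,
  ([1,2,3,5], [3,4,5,7]) ,
  ([0,1,2,3,5], [0,6,5,7]) ,
  ([4,5], [3,2,1,0,6,5,7]) ,
  ([0,4,5], [0,6,5,7]) ,
  ([0,1,4,5], [0,6,5,7]) ,
  ([2,4,5], [2,3,4,7]) ,
  ([0,2,4,5], [0,1,2,7]) ,
  ([1,2,4,5], [2,3,4,7]) ,
  ([0,1,2,4,5], [0,6,5,7]) ,
  ([0,3,4,5], [0,6,5,7]) ,
  ([1,3,4,5], [1,2,3,7]) ,
  ([0,1,3,4,5], [0,6,5,7]) ,
  ([2,3,4,5], [2,3,4,5,7]) ,
  ([0,2,3,4,5], [0,1,2,7]) ,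
  ([1,2,3,4,5], [1,2,3,4,7]) ,
  ([0,1,2,3,4,5], [0,6,5,7]) ,
  ([6], [1,2,3,4,5,6,7]) ,
  ([0,6], [1,2,3,4,5,6,7]) ,
  ([1,6], [0,1,7,6]) ,
  ([0,2,6], [0,1,2,7]) ,
  ([1,2,6], [0,1,7,6]) ,
  ([0,1,2,6], [2,1,0,6,7]) ,
  ([1,3,6], [0,1,7,6]) ,
  ([0,1,3,6], [1,2,3,7]) ,
  ([0,2,3,6], [0,1,2,7]) ,
  ([1,2,3,6], [0,1,7,6]) ,
  ([0,1,2,3,6], [0,1,2,3,7]) ,
  ([4,6], [4,5,6,7]) ,
  ([0,4,6], [4,5,6,7]) ,
  ([1,4,6], [0,1,7,6]) ,
  ([0,1,4,6], [4,5,6,7]) ,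
  ([2,4,6], [2,3,4,7]) ,
  ([0,2,4,6], [0,1,2,7]) ,
  ([1,2,4,6], [0,1,7,6]) ,
  ([0,1,2,4,6], [2,3,4,7]) ,
  ([3,4,6], [4,5,6,7]) ,
  ([0,3,4,6], [4,5,6,7]) ,
  ([1,3,4,6], [0,1,7,6]) ,
  ([0,1,3,4,6], [1,2,3,7]) ,
  ([2,3,4,6], [4,5,6,7]) ,
  ([0,2,3,4,6], [0,1,2,7]) ,
  ([1,2,3,4,6], [0,1,7,6]) ,
  ([0,1,2,3,4,6], [4,5,6,7]) ,
  ([5,6], [0,1,2,3,4,5,7]) ,
  ([1,5,6], [0,1,7,6]) ,
  ([0,1,5,6], [1,0,6,5,7]) ,
  ([0,2,5,6], [0,1,2,7]) ,
  ([1,2,5,6], [0,1,7,6]) ,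
  ([0,1,2,5,6], [1,0,6,5,7]) ,
  ([3,5,6], [3,4,5,7]) ,
  ([0,3,5,6], [3,4,5,7]) ,
  ([1,3,5,6], [0,1,7,6]) ,
  ([0,1,3,5,6], [1,2,3,7]) ,
  ([2,3,5,6], [3,4,5,7]) ,
  ([0,2,3,5,6], [0,1,2,7]) ,
  ([1,2,3,5,6], [0,1,7,6]) ,
  ([0,1,2,3,5,6], [3,4,5,7]) ,
  ([0,4,5,6], [0,6,5,4,7]) ,
  ([1,4,5,6], [0,1,7,6]) ,
  ([0,1,4,5,6], [0,6,5,4,7]) ,
  ([2,4,5,6], [2,3,4,7]) ,
  ([0,2,4,5,6], [0,1,2,7]) ,
  ([1,2,4,5,6], [0,1,7,6]) ,
  ([0,1,2,4,5,6], [2,3,4,7]) ,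
  ([3,4,5,6], [3,4,5,6,7]) ,
  ([0,3,4,5,6], [0,6,5,4,7]) ,
  ([1,3,4,5,6], [0,1,7,6]) ,
  ([0,1,3,4,5,6], [1,2,3,7]) ,
  ([2,3,4,5,6], [2,3,4,5,7]) ,
  ([0,2,3,4,5,6], [0,1,2,7]) ,
  ([1,2,3,4,5,6], [0,1,7,6]) ,
  ([0,1,2,3,4,5,6], [0,1,2,3,7])]"


definition wit1 :: "nat list \<Rightarrow> nat list" where
 "wit1 L = (case map_of tab1 L of Some m \<Rightarrow> m | None \<Rightarrow> [])"

lemma one_comp: "list_all (\<lambda>L. L = [] \<or> L \<in> set allowed \<or> check_any 8 (pat L [] False) (wit1 L)) (subseqs [0..<7])"
  by code_simp


definition Ranti :: "nat \<Rightarrow> nat \<Rightarrow> nat \<Rightarrow> nat list list \<Rightarrow> bool" where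
 "Ranti c1 c2 k W = list_all (\<lambda>j. check_any 9 (pat (ty c1 j) (ty c2 (j+k)) True) (W!j)) [0..<7]"
definition Rcomp :: "nat \<Rightarrow> nat \<Rightarrow> nat \<Rightarrow> nat list list \<Rightarrow> bool" where
 "Rcomp c1 c2 k W = list_all (\<lambda>j. ty c1 j \<noteq> ty c2 (j+k) \<and> check_any 9 (pat (ty c1 j) (ty c2 (j+k)) False) (W!j)) [0..<7]"
definition Rnever :: "nat \<Rightarrow> nat \<Rightarrow> nat \<Rightarrow> nat list list \<Rightarrow> nat list list \<Rightarrow> bool" where
 "Rnever c1 c2 k W1 W2 = list_all (\<lambda>j. ty c1 j \<noteq> ty c2 (j+k) \<and> check_any 9 (pat (ty c1 j) (ty c2 (j+k)) True) (W1!j)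
     \<and> check_any 9 (pat (ty c1 j) (ty c2 (j+k)) False) (W2!j)) [0..<7]"
definition Rclq :: "nat \<Rightarrow> nat list list \<Rightarrow> bool" where
 "Rclq c W = list_all (\<lambda>j. check_any 9 (pat (ty c j) (ty c j) False) (W!j)) [0..<7]"

definition bad :: "nat list \<Rightarrow> nat list \<Rightarrow> bool \<Rightarrow> bool" where
 "bad L1 L2 e \<longleftrightarrow> (\<exists>ms. check_any 9 (pat L1 L2 e) ms)"

lemma embeds_transfer:
  assumes hf: "H_free V E k H" and im: "w ` {..<n} \<subseteq> V" and inj: "inj_on w {..<n}"
    and ed: "\<forall>a<n. \<forall>b<n. E (w a) (w b) = P a b" and em: "embeds n k H P ms"
  shows False
proof -
  from em have len: "length ms = k" and lt: "\<forall>a\<in>set ms. a < n" and d: "distinct ms"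
    and ed2: "\<forall>i<k. \<forall>j<k. P (ms!i) (ms!j) = H i j"
    unfolding embeds_def by (auto simp: list_all_iff)
  have lt2: "\<And>i. i < k \<Longrightarrow> ms ! i < n" using lt len nth_mem by blast
  let ?f = "\<lambda>i. w (ms ! i)"
  have "induced_copy V E k H ?f"
    unfolding induced_copy_def
  proof (intro conjI)
    show "?f ` {..<k} \<subseteq> V" using im lt2 by auto
    show "inj_on ?f {..<k}"
    proof (rule inj_onI)
      fix i j assume "i \<in> {..<k}" "j \<in> {..<k}" "w (ms ! i) = w (ms ! j)"
      then have "ms ! i = ms ! j" using inj lt2 unfolding inj_on_def by auto
      then show "i = j" using d len \<open>i \<in> {..<k}\<close> \<open>j \<in> {..<k}\<close> nth_eq_iff_index_eq by auto
    qed
    show "\<forall>i<k. \<forall>j<k. E (?f i) (?f j) = H i j" using ed ed2 lt2 by auto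
  qed
  with hf show False unfolding H_free_def by blast
qed

definition Lx :: "('a \<Rightarrow> 'a \<Rightarrow> bool) \<Rightarrow> (nat \<Rightarrow> 'a) \<Rightarrow> 'a \<Rightarrow> nat list" where
 "Lx E v x = filter (\<lambda>a. E x (v a)) [0..<7]"

definition Tset :: "'a set \<Rightarrow> ('a \<Rightarrow> 'a \<Rightarrow> bool) \<Rightarrow> (nat \<Rightarrow> 'a) \<Rightarrow> nat \<Rightarrow> nat \<Rightarrow> 'a set" where
 "Tset V E v c i = (if c = 0 then Xset V E v i else if c = 1 then Yset V E v i else Zset V E v i)"

lemma filter_subseqs: "filter P xs \<in> set (subseqs xs)"
  by (induction xs) (auto simp: Let_def)

lemma filt: assumes "S \<subseteq> {..<7}" "T \<subseteq> {..<7}"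
  shows "(filter (\<lambda>a. a \<in> S) [0..<7] = filter (\<lambda>a. a \<in> T) [0..<7]) = (S = T)"
proof
  assume h: "filter (\<lambda>a. a \<in> S) [0..<7] = filter (\<lambda>a. a \<in> T) [0..<7]"
  have "S = set (filter (\<lambda>a. a \<in> S) [0..<7])" using assms(1) by auto
  also have "\<dots> = set (filter (\<lambda>a. a \<in> T) [0..<7])" using h by simp
  also have "\<dots> = T" using assms(2) by auto
  finally show "S = T" .
qed simp

lemma mod_shift: "((i::nat) + k + m) mod 7 = (i mod 7 + k + m) mod 7"
  by (metis mod_add_left_eq add.assoc)

lemma tlst_shift: "tlst c (i + k) = tlst c (i mod 7 + k)"
  unfolding tlst_def using mod_shift[of i k] mod_shift[of i k 1] mod_shift[of i k 2]
    mod_shift[of i k 3] mod_shift[of i k 4] by (simp add: mod_add_left_eq)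

lemma ty_shift: "ty c (i + k) = ty c (i mod 7 + k)"
  unfolding ty_def using tlst_shift by simp

lemma ty_shift2: assumes "\<forall>j<7. Q (ty c1 j) (ty c2 (j+k))" shows "Q (ty c1 i) (ty c2 (i+k))"
proof -
  have "Q (ty c1 (i mod 7)) (ty c2 (i mod 7 + k))" using assms by simp
  moreover have "ty c1 i = ty c1 (i mod 7)" using ty_shift[of c1 i 0] by simp
  ultimately show ?thesis using ty_shift[of c2 i k] by simp
qed

lemma tlst_lt: "set (tlst c i) \<subseteq> {..<7}"
  unfolding tlst_def by auto

lemma complete_to_Un: "complete_to E S (A \<union> B) = (complete_to E S A \<and> complete_to E S B)"
  unfolding complete_to_def by blast
lemma anticomplete_to_Un: "anticomplete_to E S (A \<union> B) = (anticomplete_to E S A \<and> anticomplete_to E S B)"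
  unfolding anticomplete_to_def by blast

lemma nine_cases: "(a::nat) < 9 \<Longrightarrow> a < 7 \<or> a = 7 \<or> a = 8" by arith

context
  fixes V :: "'a set" and E :: "'a \<Rightarrow> 'a \<Rightarrow> bool" and v :: "nat \<Rightarrow> 'a"
  assumes graph: "simple_graph V E"
    and P7free: "H_free V E 7 path_adj"
    and C4free: "H_free V E 4 (cycle_adj 4)"
    and gemfree: "H_free V E 5 gem_adj"
    and hole: "hole7 V E v"
begin

lemma symE: "E x y = E y x" using graph unfolding simple_graph_def by blast
lemma irr: "\<not> E x x" using graph unfolding simple_graph_def by blast
lemma vinj: "inj_on v {..<7}" using hole unfolding hole7_def induced_copy_def by blast
lemma vV: "a < 7 \<Longrightarrow> v a \<in> V" using hole unfolding hole7_def induced_copy_def by blast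
lemma vE: "a < 7 \<Longrightarrow> b < 7 \<Longrightarrow> E (v a) (v b) = cycle_adj 7 a b"
  using hole unfolding hole7_def induced_copy_def by blast

lemma nbD: "x \<in> nbhd V E (holeA v) \<Longrightarrow> x \<in> V \<and> (\<forall>a<7. x \<noteq> v a)"
  unfolding nbhd_def holeA_def by auto

lemma no_check: assumes c: "check_any n P ms" and im: "w ` {..<n} \<subseteq> V" and inj: "inj_on w {..<n}"
   and ed: "\<forall>a<n. \<forall>b<n. E (w a) (w b) = P a b" shows False
proof -
  from c have "embeds n 7 path_adj P ms \<or> embeds n 4 (cycle_adj 4) P ms \<or> embeds n 5 gem_adj P ms"
    unfolding check_any_def .
  then show False
  proof (elim disjE)
    assume "embeds n 7 path_adj P ms" then show False by (rule embeds_transfer[OF P7free im inj ed])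
  next
    assume "embeds n 4 (cycle_adj 4) P ms" then show False by (rule embeds_transfer[OF C4free im inj ed])
  next
    assume "embeds n 5 gem_adj P ms" then show False by (rule embeds_transfer[OF gemfree im inj ed])
  qed
qed

lemma pair_ok:
  assumes x: "x \<in> nbhd V E (holeA v)" and y: "y \<in> nbhd V E (holeA v)" and xy: "x \<noteq> y"
  shows "\<not> check_any 9 (pat (Lx E v x) (Lx E v y) (E x y)) ms"
proof
  assume c: "check_any 9 (pat (Lx E v x) (Lx E v y) (E x y)) ms"
  define w where "w = (\<lambda>a. if a < 7 then v a else if a = 7 then x else y)"
  from nbD[OF x] nbD[OF y] have xV: "x \<in> V" "y \<in> V" "\<forall>a<7. x \<noteq> v a" "\<forall>a<7. y \<noteq> v a" by auto
  have "w ` {..<9} \<subseteq> V" using xV vV unfolding w_def by auto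
  moreover have "inj_on w {..<9}"
  proof (rule inj_onI)
    fix a b assume a: "a \<in> {..<9}" and b: "b \<in> {..<9}" and e: "w a = w b"
    have ca: "a < 7 \<or> a = 7 \<or> a = 8" and cb: "b < 7 \<or> b = 7 \<or> b = 8" using a b by auto
    from ca cb e xV xy vinj show "a = b"
      unfolding w_def inj_on_def by (elim disjE) (auto simp: lessThan_iff)
  qed
  moreover have "\<forall>a<9. \<forall>b<9. E (w a) (w b) = pat (Lx E v x) (Lx E v y) (E x y) a b"
  proof (intro allI impI)
    fix a b :: nat assume a: "a < 9" and b: "b < 9"
    have ca: "a < 7 \<or> a = 7 \<or> a = 8" and cb: "b < 7 \<or> b = 7 \<or> b = 8" using a b by auto
    have kx: "\<And>b. b < 7 \<Longrightarrow> (b \<in> set (Lx E v x)) = E x (v b)" unfolding Lx_def by auto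
    have ky: "\<And>b. b < 7 \<Longrightarrow> (b \<in> set (Lx E v y)) = E y (v b)" unfolding Lx_def by auto
    from ca cb show "E (w a) (w b) = pat (Lx E v x) (Lx E v y) (E x y) a b"
      by (elim disjE) (simp_all add: w_def pat_def kx ky vE irr symE[of "v a" x] symE[of "v a" y] symE[of y x])
  qed
  ultimately show False by (rule no_check[OF c])
qed

lemma single_ok:
  assumes x: "x \<in> nbhd V E (holeA v)"
  shows "\<not> check_any 8 (pat (Lx E v x) [] False) ms"
proof
  assume c: "check_any 8 (pat (Lx E v x) [] False) ms"
  define w where "w = (\<lambda>a. if a < 7 then v a else x)"
  from nbD[OF x] have xV: "x \<in> V" "\<forall>a<7. x \<noteq> v a" by auto
  have "w ` {..<8} \<subseteq> V" using xV vV unfolding w_def by auto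
  moreover have "inj_on w {..<8}"
  proof (rule inj_onI)
    fix a b assume a: "a \<in> {..<8}" and b: "b \<in> {..<8}" and e: "w a = w b"
    have ca: "a < 7 \<or> a = 7" and cb: "b < 7 \<or> b = 7" using a b by auto
    from ca cb e xV vinj show "a = b"
      unfolding w_def inj_on_def by (elim disjE) (auto simp: lessThan_iff)
  qed
  moreover have "\<forall>a<8. \<forall>b<8. E (w a) (w b) = pat (Lx E v x) [] False a b"
  proof (intro allI impI)
    fix a b :: nat assume a: "a < 8" and b: "b < 8"
    have ca: "a < 7 \<or> a = 7" and cb: "b < 7 \<or> b = 7" using a b by auto
    have kx: "\<And>b. b < 7 \<Longrightarrow> (b \<in> set (Lx E v x)) = E x (v b)" unfolding Lx_def by auto
    from ca cb show "E (w a) (w b) = pat (Lx E v x) [] False a b"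
      by (elim disjE) (simp_all add: w_def pat_def kx vE irr symE[of "v a" x])
  qed
  ultimately show False by (rule no_check[OF c])
qed

lemma nbx: assumes x: "x \<in> nbhd V E (holeA v)"
  shows "nbhd V E {x} \<inter> holeA v = v ` {a. a < 7 \<and> E x (v a)}"
  using nbD[OF x] vV unfolding nbhd_def holeA_def by auto

lemma Tset_cond: "x \<in> Tset V E v c i \<longleftrightarrow> x \<in> nbhd V E (holeA v) \<and> nbhd V E {x} \<inter> holeA v = v ` set (tlst c i)"
  unfolding Tset_def Xset_def Yset_def Zset_def tlst_def hv_def by auto

lemma memT: "x \<in> Tset V E v c i \<longleftrightarrow> x \<in> nbhd V E (holeA v) \<and> Lx E v x = ty c i"
proof (cases "x \<in> nbhd V E (holeA v)")
  case True
  have s1: "{a. a < 7 \<and> E x (v a)} \<subseteq> {..<7}" by auto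
  have "(v ` {a. a < 7 \<and> E x (v a)} = v ` set (tlst c i)) = ({a. a < 7 \<and> E x (v a)} = set (tlst c i))"
    using inj_on_image_eq_iff[OF vinj s1 tlst_lt] .
  also have "\<dots> = (filter (\<lambda>a. a \<in> {a. a < 7 \<and> E x (v a)}) [0..<7] = ty c i)"
    unfolding ty_def using filt[OF s1 tlst_lt] by simp
  also have "filter (\<lambda>a. a \<in> {a. a < 7 \<and> E x (v a)}) [0..<7] = Lx E v x"
    unfolding Lx_def by (rule filter_cong) auto
  finally show ?thesis using Tset_cond nbx[OF True] True by simp
qed (simp add: Tset_cond)

lemma T_sub: "Tset V E v c i \<subseteq> V"
  using memT nbD by blast

lemma pair_keys: "x \<in> nbhd V E (holeA v) \<Longrightarrow> y \<in> nbhd V E (holeA v) \<Longrightarrow> x \<noteq> y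
   \<Longrightarrow> bad (Lx E v x) (Lx E v y) (E x y) \<Longrightarrow> False"
  using pair_ok unfolding bad_def by blast

lemma G_anti: assumes "Ranti c1 c2 k W" shows "anticomplete_to E (Tset V E v c1 i) (Tset V E v c2 (i+k))"
proof -
  have h: "bad (ty c1 i) (ty c2 (i+k)) True"
    using assms unfolding Ranti_def list_all_iff by (intro ty_shift2[where Q="\<lambda>a b. bad a b True"]) (auto simp: bad_def)
  show ?thesis unfolding anticomplete_to_def
  proof (intro ballI notI)
    fix s t assume s: "s \<in> Tset V E v c1 i" and t: "t \<in> Tset V E v c2 (i+k)" and e: "E s t"
    from s have s1: "s \<in> nbhd V E (holeA v)" "Lx E v s = ty c1 i" using memT by auto
    from t have t1: "t \<in> nbhd V E (holeA v)" "Lx E v t = ty c2 (i+k)" using memT by auto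
    have "s \<noteq> t" using e irr by auto
    moreover have "bad (Lx E v s) (Lx E v t) (E s t)" using h s1 t1 e by simp
    ultimately show False using pair_keys s1(1) t1(1) by blast
  qed
qed

lemma G_comp: assumes "Rcomp c1 c2 k W" shows "complete_to E (Tset V E v c1 i) (Tset V E v c2 (i+k))"
proof -
  have h: "ty c1 i \<noteq> ty c2 (i+k) \<and> bad (ty c1 i) (ty c2 (i+k)) False"
    using assms unfolding Rcomp_def list_all_iff
    by (intro ty_shift2[where Q="\<lambda>a b. a \<noteq> b \<and> bad a b False"]) (auto simp: bad_def)
  show ?thesis unfolding complete_to_def
  proof (intro ballI)
    fix s t assume s: "s \<in> Tset V E v c1 i" and t: "t \<in> Tset V E v c2 (i+k)"
    from s have s1: "s \<in> nbhd V E (holeA v)" "Lx E v s = ty c1 i" using memT by auto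
    from t have t1: "t \<in> nbhd V E (holeA v)" "Lx E v t = ty c2 (i+k)" using memT by auto
    have st: "s \<noteq> t" using h s1 t1 by auto
    show "E s t"
    proof (rule ccontr)
      assume e: "\<not> E s t"
      have "bad (Lx E v s) (Lx E v t) (E s t)" using h s1 t1 e by simp
      then show False using pair_keys s1(1) t1(1) st by blast
    qed
  qed
qed

lemma G_never: assumes "Rnever c1 c2 k W1 W2" shows "Tset V E v c1 i = {} \<or> Tset V E v c2 (i+k) = {}"
proof (rule ccontr)
  have h: "ty c1 i \<noteq> ty c2 (i+k) \<and> bad (ty c1 i) (ty c2 (i+k)) True \<and> bad (ty c1 i) (ty c2 (i+k)) False"
    using assms unfolding Rnever_def list_all_iff
    by (intro ty_shift2[where Q="\<lambda>a b. a \<noteq> b \<and> bad a b True \<and> bad a b False"]) (auto simp: bad_def)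
  assume "\<not> (Tset V E v c1 i = {} \<or> Tset V E v c2 (i+k) = {})"
  then obtain s t where s: "s \<in> Tset V E v c1 i" and t: "t \<in> Tset V E v c2 (i+k)" by blast
  from s have s1: "s \<in> nbhd V E (holeA v)" "Lx E v s = ty c1 i" using memT by auto
  from t have t1: "t \<in> nbhd V E (holeA v)" "Lx E v t = ty c2 (i+k)" using memT by auto
  have st: "s \<noteq> t" using h s1 t1 by auto
  have "bad (Lx E v s) (Lx E v t) (E s t)" using h s1 t1 by (cases "E s t") simp_all
  then show False using pair_keys s1(1) t1(1) st by blast
qed

lemma G_clq: assumes "Rclq c W" shows "is_clique V E (Tset V E v c i)"
proof -
  have h: "bad (ty c i) (ty c (i+0)) False"
    using assms unfolding Rclq_def list_all_iff by (intro ty_shift2[where Q="\<lambda>a b. bad a b False"]) (auto simp: bad_def)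
  show ?thesis unfolding is_clique_def
  proof (intro conjI ballI impI)
    show "Tset V E v c i \<subseteq> V" by (rule T_sub)
    fix s t assume s: "s \<in> Tset V E v c i" and t: "t \<in> Tset V E v c i" and st: "s \<noteq> t"
    from s have s1: "s \<in> nbhd V E (holeA v)" "Lx E v s = ty c i" using memT by auto
    from t have t1: "t \<in> nbhd V E (holeA v)" "Lx E v t = ty c i" using memT by auto
    show "E s t"
    proof (rule ccontr)
      assume e: "\<not> E s t"
      have "bad (Lx E v s) (Lx E v t) (E s t)" using h s1 t1 e by simp
      then show False using pair_keys s1(1) t1(1) st by blast
    qed
  qed
qed

lemma part_a: "nbhd V E (holeA v) = (\<Union>i<7. Xset V E v i \<union> Yset V E v i \<union> Zset V E v i)"
proof
  show "(\<Union>i<7. Xset V E v i \<union> Yset V E v i \<union> Zset V E v i) \<subseteq> nbhd V E (holeA v)"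
    unfolding Xset_def Yset_def Zset_def by auto
next
  show "nbhd V E (holeA v) \<subseteq> (\<Union>i<7. Xset V E v i \<union> Yset V E v i \<union> Zset V E v i)"
  proof
    fix x assume x: "x \<in> nbhd V E (holeA v)"
    have "Lx E v x \<in> set (subseqs [0..<7])" unfolding Lx_def by (rule filter_subseqs)
    moreover have "Lx E v x \<noteq> []"
    proof -
      from x obtain a where "a < 7" "E (v a) x" unfolding nbhd_def holeA_def by auto
      then have "a \<in> set (Lx E v x)" unfolding Lx_def using symE by auto
      then show ?thesis by auto
    qed
    moreover have "\<not> check_any 8 (pat (Lx E v x) [] False) (wit1 (Lx E v x))" by (rule single_ok[OF x])
    ultimately have "Lx E v x \<in> set allowed" using one_comp unfolding list_all_iff by blast
    then obtain j where j: "j < 7" "Lx E v x = ty 0 j \<or> Lx E v x = ty 1 j \<or> Lx E v x = ty 2 j"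
      unfolding allowed_def by auto
    then have "x \<in> Tset V E v 0 j \<or> x \<in> Tset V E v 1 j \<or> x \<in> Tset V E v 2 j" using memT x by blast
    then show "x \<in> (\<Union>i<7. Xset V E v i \<union> Yset V E v i \<union> Zset V E v i)"
      using j(1) unfolding Tset_def by auto
  qed
qed

end

lemma rc_1_1_1: "Rcomp 1 1 1 [[4,5,6,0,7,2,8],[0,6,5,4,8,2,7],[1,0,6,5,8,3,7],[0,1,2,3,7,5,8],[1,2,3,4,7,6,8],[2,3,4,5,7,0,8],[3,4,5,6,7,1,8]]" by code_simp
lemma rc_1_1_6: "Rcomp 1 1 6 [[3,4,5,6,8,1,7],[4,5,6,0,8,2,7],[0,6,5,4,7,2,8],[1,0,6,5,7,3,8],[0,1,2,3,8,5,7],[1,2,3,4,8,6,7],[2,3,4,5,8,0,7]]" by code_simp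
lemma rc_0_1_2: "Rcomp 0 1 2 [[2,8,4,5,6,0,7],[3,8,5,6,0,1,7],[0,6,8,4,3,2,7],[1,0,8,5,4,3,7],[2,1,8,6,5,4,7],[0,8,2,3,4,5,7],[1,8,3,4,5,6,7]]" by code_simp
lemma rc_0_1_6: "Rcomp 0 1 6 [[1,8,6,5,4,3,7],[2,8,0,6,5,4,7],[0,1,8,3,4,5,7],[1,2,8,4,5,6,7],[2,3,8,5,6,0,7],[3,4,8,6,0,1,7],[0,8,5,4,3,2,7]]" by code_simp
lemma rc_2_1_2: "Rcomp 2 1 2 [[2,8,4,7,3],[3,8,5,7,4],[4,8,6,7,5],[5,8,0,7,6],[6,8,1,7,0],[0,8,2,7,1],[1,8,3,7,2]]" by code_simp
lemma rc_2_1_3: "Rcomp 2 1 3 [[5,8,3,7,4],[6,8,4,7,5],[0,8,5,7,6],[1,8,6,7,0],[2,8,0,7,1],[3,8,1,7,2],[4,8,2,7,3]]" by code_simp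
lemma rc_2_1_6: "Rcomp 2 1 6 [[2,1,8,6,5,4,7],[3,2,8,0,6,5,7],[0,1,8,3,4,5,7],[1,2,8,4,5,6,7],[2,3,8,5,6,0,7],[0,6,8,4,3,2,7],[1,0,8,5,4,3,7]]" by code_simp
lemma ra_1_1_2: "Ranti 1 1 2 [[0,1,2,8,7],[1,2,3,8,7],[2,3,4,8,7],[0,6,5,7,8],[0,8,7,5,6],[1,8,7,6,0],[0,7,8,2,1]]" by code_simp
lemma ra_1_1_3: "Ranti 1 1 3 [[2,3,8,7],[3,4,8,7],[4,5,8,7],[5,6,8,7],[0,6,7,8],[0,1,8,7],[1,2,8,7]]" by code_simp
lemma ra_1_1_4: "Ranti 1 1 4 [[0,6,8,7],[0,1,7,8],[1,2,7,8],[2,3,7,8],[3,4,7,8],[4,5,7,8],[5,6,7,8]]" by code_simp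
lemma ra_1_1_5: "Ranti 1 1 5 [[1,7,8,6,0],[0,8,7,2,1],[0,1,2,7,8],[1,2,3,7,8],[2,3,4,7,8],[0,6,5,8,7],[0,7,8,5,6]]" by code_simp
lemma ra_0_0_1: "Ranti 0 0 1 [[0,1,8,7],[1,2,8,7],[2,3,8,7],[0,6,7,8],[0,1,8,7],[1,2,8,7],[0,6,7,8]]" by code_simp
lemma ra_0_0_3: "Ranti 0 0 3 [[0,6,8,7],[0,1,7,8],[1,2,7,8],[2,3,7,8],[3,4,7,8],[4,5,7,8],[5,6,7,8]]" by code_simp
lemma ra_0_0_4: "Ranti 0 0 4 [[3,4,8,7],[4,5,8,7],[5,6,8,7],[0,6,7,8],[0,1,8,7],[1,2,8,7],[2,3,8,7]]" by code_simp
lemma ra_0_0_6: "Ranti 0 0 6 [[0,6,8,7],[0,1,7,8],[1,2,7,8],[2,3,7,8],[0,6,8,7],[0,1,7,8],[1,2,7,8]]" by code_simp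
lemma ra_0_1_0: "Ranti 0 1 0 [[1,8,7,3,4,5,6],[0,6,5,4,7,8,2],[1,0,6,5,7,8,3],[2,1,0,6,7,8,4],[3,2,1,0,7,8,5],[4,3,2,1,7,8,6],[0,8,7,2,3,4,5]]" by code_simp
lemma ra_0_1_1: "Ranti 0 1 1 [[2,8,7,0,6,5,4],[3,8,7,1,0,6,5],[4,8,7,2,1,0,6],[0,1,2,3,7,8,5],[1,2,3,4,7,8,6],[0,8,7,5,4,3,2],[1,8,7,6,5,4,3]]" by code_simp
lemma ra_0_1_3: "Ranti 0 1 3 [[5,4,3,7,8],[6,5,4,7,8],[0,6,5,7,8],[1,0,6,7,8],[2,1,0,7,8],[3,2,1,7,8],[4,3,2,7,8]]" by code_simp
lemma ra_0_1_4: "Ranti 0 1 4 [[0,6,8,7],[0,1,7,8],[1,2,7,8],[0,6,7,8],[0,1,8,7],[1,2,8,7],[2,3,8,7]]" by code_simp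
lemma ra_0_1_5: "Ranti 0 1 5 [[5,6,0,7,8],[6,0,1,7,8],[0,1,2,7,8],[1,2,3,7,8],[2,3,4,7,8],[3,4,5,7,8],[4,5,6,7,8]]" by code_simp
lemma ra_2_2_1: "Ranti 2 2 1 [[0,1,8,7],[1,2,8,7],[2,3,8,7],[3,4,8,7],[4,5,8,7],[5,6,8,7],[0,6,7,8]]" by code_simp
lemma ra_2_2_2: "Ranti 2 2 2 [[0,6,8,7],[0,1,7,8],[0,6,7,8],[0,1,8,7],[0,6,8,7],[0,1,7,8],[1,2,7,8]]" by code_simp
lemma ra_2_2_5: "Ranti 2 2 5 [[0,1,8,7],[1,2,8,7],[0,6,7,8],[0,1,8,7],[0,6,8,7],[0,1,7,8],[0,6,7,8]]" by code_simp
lemma ra_2_2_6: "Ranti 2 2 6 [[0,6,8,7],[0,1,7,8],[1,2,7,8],[2,3,7,8],[3,4,7,8],[4,5,7,8],[5,6,7,8]]" by code_simp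
lemma ra_2_0_1: "Ranti 2 0 1 [[0,1,8,7],[1,2,8,7],[2,3,8,7],[3,4,8,7],[4,5,8,7],[5,6,8,7],[0,6,7,8]]" by code_simp
lemma ra_2_0_2: "Ranti 2 0 2 [[2,3,7,8],[3,4,7,8],[0,6,7,8],[0,1,8,7],[0,6,8,7],[0,1,7,8],[1,2,7,8]]" by code_simp
lemma ra_2_0_3: "Ranti 2 0 3 [[0,6,8,7],[0,1,7,8],[1,2,7,8],[2,3,7,8],[3,4,7,8],[4,5,7,8],[5,6,7,8]]" by code_simp
lemma ra_2_0_5: "Ranti 2 0 5 [[0,1,8,7],[1,2,8,7],[0,6,7,8],[0,1,8,7],[1,2,8,7],[2,3,8,7],[0,6,7,8]]" by code_simp
lemma ra_2_1_0: "Ranti 2 1 0 [[2,3,7,8],[3,4,7,8],[4,5,7,8],[5,6,7,8],[0,6,8,7],[0,1,7,8],[1,2,7,8]]" by code_simp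
lemma ra_2_1_1: "Ranti 2 1 1 [[0,1,8,7],[1,2,8,7],[2,3,8,7],[3,4,8,7],[4,5,8,7],[5,6,8,7],[0,6,7,8]]" by code_simp
lemma ra_2_1_4: "Ranti 2 1 4 [[0,6,8,7],[0,1,7,8],[1,2,7,8],[2,3,7,8],[3,4,7,8],[4,5,7,8],[5,6,7,8]]" by code_simp
lemma ra_2_1_5: "Ranti 2 1 5 [[4,5,8,7],[5,6,8,7],[0,6,7,8],[0,1,8,7],[1,2,8,7],[2,3,8,7],[3,4,8,7]]" by code_simp
lemma rn_0_0_2: "Rnever 0 0 2 [[2,3,7,8],[3,4,7,8],[4,5,7,8],[5,6,7,8],[0,6,8,7],[0,1,7,8],[1,2,7,8]] [[1,0,7,3,4,5,8],[2,1,7,4,5,6,8],[3,2,7,5,6,0,8],[0,1,8,5,4,3,7],[1,2,8,6,5,4,7],[2,3,8,0,6,5,7],[0,6,7,2,3,4,8]]" by code_simp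
lemma rn_0_0_5: "Rnever 0 0 5 [[0,1,8,7],[1,2,8,7],[2,3,8,7],[3,4,8,7],[4,5,8,7],[5,6,8,7],[0,6,7,8]] [[2,3,7,0,6,5,8],[0,6,8,2,3,4,7],[1,0,8,3,4,5,7],[2,1,8,4,5,6,7],[3,2,8,5,6,0,7],[0,1,7,5,4,3,8],[1,2,7,6,5,4,8]]" by code_simp
lemma rn_2_2_3: "Rnever 2 2 3 [[0,8,3,4,7],[0,1,7,4,8],[1,2,7,5,8],[0,6,8,3,7],[0,7,4,3,8],[1,7,5,4,8],[2,7,6,5,8]] [[0,7,3,8],[1,7,4,8],[2,7,5,8],[3,7,6,8],[0,7,4,8],[1,7,5,8],[2,7,6,8]]" by code_simp
lemma rn_2_2_4: "Rnever 2 2 4 [[0,8,4,3,7],[1,8,5,4,7],[2,8,6,5,7],[0,7,3,4,8],[0,1,8,4,7],[1,2,8,5,7],[0,6,7,3,8]] [[0,7,4,8],[1,7,5,8],[2,7,6,8],[0,7,3,8],[1,7,4,8],[2,7,5,8],[3,7,6,8]]" by code_simp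
lemma rn_2_0_0: "Rnever 2 0 0 [[0,8,3,4,7],[1,8,4,5,7],[2,8,5,6,7],[0,6,8,3,7],[1,0,8,4,7],[2,1,8,5,7],[3,2,8,6,7]] [[0,7,3,8],[1,7,4,8],[2,7,5,8],[3,7,6,8],[0,7,4,8],[1,7,5,8],[2,7,6,8]]" by code_simp
lemma rn_2_0_4: "Rnever 2 0 4 [[0,8,4,3,7],[1,8,5,4,7],[2,8,6,5,7],[3,8,0,6,7],[0,1,8,4,7],[1,2,8,5,7],[2,3,8,6,7]] [[0,7,4,8],[1,7,5,8],[2,7,6,8],[0,7,3,8],[1,7,4,8],[2,7,5,8],[3,7,6,8]]" by code_simp
lemma rn_2_0_6: "Rnever 2 0 6 [[0,6,8,7],[0,1,7,8],[1,2,7,8],[2,3,7,8],[0,6,8,7],[0,1,7,8],[1,2,7,8]] [[1,2,8,6,5,4,7],[2,3,8,0,6,5,7],[0,6,7,2,3,4,8],[1,0,7,3,4,5,8],[2,1,7,4,5,6,8],[3,2,7,5,6,0,8],[0,1,8,5,4,3,7]]" by code_simp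
lemma rn_0_2_0: "Rnever 0 2 0 [[0,7,3,4,8],[1,7,4,5,8],[2,7,5,6,8],[0,6,7,3,8],[1,0,7,4,8],[2,1,7,5,8],[3,2,7,6,8]] [[0,7,3,8],[1,7,4,8],[2,7,5,8],[3,7,6,8],[0,7,4,8],[1,7,5,8],[2,7,6,8]]" by code_simp
lemma rq_0: "Rclq 0 [[0,7,3,8],[1,7,4,8],[2,7,5,8],[3,7,6,8],[0,7,4,8],[1,7,5,8],[2,7,6,8]]" by code_simp
lemma rq_1: "Rclq 1 [[0,7,2,8],[1,7,3,8],[2,7,4,8],[3,7,5,8],[4,7,6,8],[0,7,5,8],[1,7,6,8]]" by code_simp
lemma rq_2: "Rclq 2 [[0,7,3,8],[1,7,4,8],[2,7,5,8],[0,7,3,8],[0,7,4,8],[1,7,5,8],[2,7,6,8]]" by code_simp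
theorem mainTheorem9:
  fixes V :: "'a set" and E :: "'a \<Rightarrow> 'a \<Rightarrow> bool" and v :: "nat \<Rightarrow> 'a"
  assumes graph: "simple_graph V E"
    and P7free: "H_free V E 7 path_adj"
    and C4free: "H_free V E 4 (cycle_adj 4)"
    and gemfree: "H_free V E 5 gem_adj"
    and hole: "hole7 V E v"
  defines "A \<equiv> holeA v"
    and "X \<equiv> Xset V E v" and "Y \<equiv> Yset V E v" and "Z \<equiv> Zset V E v"
  shows
   "nbhd V E A = (\<Union>i<7. X i \<union> Y i \<union> Z i)
    \<and> (\<forall>i. is_clique V E (X i \<union> Z i) \<and> is_clique V E (Y i))
    \<and> (\<forall>i. complete_to E (Y i) (Y (i+1) \<union> Y (i+6))
          \<and> anticomplete_to E (Y i) (Y (i+2) \<union> Y (i+3) \<union> Y (i+4) \<union> Y (i+5)))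
    \<and> (\<forall>i. (X i = {} \<or> X (i+2) \<union> X (i+5) = {})
          \<and> anticomplete_to E (X i) (X (i+1) \<union> X (i+3) \<union> X (i+4) \<union> X (i+6)))
    \<and> (\<forall>i. complete_to E (X i) (Y (i+2) \<union> Y (i+6))
          \<and> anticomplete_to E (X i) (Y i \<union> Y (i+1) \<union> Y (i+3) \<union> Y (i+4) \<union> Y (i+5)))
    \<and> (\<forall>i. (Z i = {} \<or> Z (i+3) \<union> Z (i+4) = {})
          \<and> anticomplete_to E (Z i) (Z (i+1) \<union> Z (i+2) \<union> Z (i+5) \<union> Z (i+6)))
    \<and> (\<forall>i. (Z i = {} \<or> X i \<union> X (i+4) \<union> X (i+6) = {})
          \<and> anticomplete_to E (Z i) (X (i+1) \<union> X (i+2) \<union> X (i+3) \<union> X (i+5)))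
    \<and> (\<forall>i. complete_to E (Z i) (Y (i+2) \<union> Y (i+3) \<union> Y (i+6))
          \<and> anticomplete_to E (Z i) (Y i \<union> Y (i+1) \<union> Y (i+4) \<union> Y (i+5)))"

proof -
  have eqX: "Xset V E v = Tset V E v 0" by (rule ext) (simp add: Tset_def)
  have eqY: "Yset V E v = Tset V E v 1" by (rule ext) (simp add: Tset_def)
  have eqZ: "Zset V E v = Tset V E v 2" by (rule ext) (simp add: Tset_def)
  have pa: "nbhd V E (holeA v) = (\<Union>i<7. Tset V E v 0 i \<union> Tset V E v 1 i \<union> Tset V E v 2 i)"
    using part_a[OF graph P7free C4free gemfree hole] unfolding eqX eqY eqZ .
  note F = G_comp[OF graph P7free C4free gemfree hole rc_1_1_1, simplified]
    G_comp[OF graph P7free C4free gemfree hole rc_1_1_6, simplified]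
    G_comp[OF graph P7free C4free gemfree hole rc_0_1_2, simplified]
    G_comp[OF graph P7free C4free gemfree hole rc_0_1_6, simplified]
    G_comp[OF graph P7free C4free gemfree hole rc_2_1_2, simplified]
    G_comp[OF graph P7free C4free gemfree hole rc_2_1_3, simplified]
    G_comp[OF graph P7free C4free gemfree hole rc_2_1_6, simplified]
    G_anti[OF graph P7free C4free gemfree hole ra_1_1_2, simplified]
    G_anti[OF graph P7free C4free gemfree hole ra_1_1_3, simplified]
    G_anti[OF graph P7free C4free gemfree hole ra_1_1_4, simplified]
    G_anti[OF graph P7free C4free gemfree hole ra_1_1_5, simplified]
    G_anti[OF graph P7free C4free gemfree hole ra_0_0_1, simplified]
    G_anti[OF graph P7free C4free gemfree hole ra_0_0_3, simplified]
    G_anti[OF graph P7free C4free gemfree hole ra_0_0_4, simplified]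
    G_anti[OF graph P7free C4free gemfree hole ra_0_0_6, simplified]
    G_anti[OF graph P7free C4free gemfree hole ra_0_1_0, simplified]
    G_anti[OF graph P7free C4free gemfree hole ra_0_1_1, simplified]
    G_anti[OF graph P7free C4free gemfree hole ra_0_1_3, simplified]
    G_anti[OF graph P7free C4free gemfree hole ra_0_1_4, simplified]
    G_anti[OF graph P7free C4free gemfree hole ra_0_1_5, simplified]
    G_anti[OF graph P7free C4free gemfree hole ra_2_2_1, simplified]
    G_anti[OF graph P7free C4free gemfree hole ra_2_2_2, simplified]
    G_anti[OF graph P7free C4free gemfree hole ra_2_2_5, simplified]
    G_anti[OF graph P7free C4free gemfree hole ra_2_2_6, simplified]
    G_anti[OF graph P7free C4free gemfree hole ra_2_0_1, simplified]
    G_anti[OF graph P7free C4free gemfree hole ra_2_0_2, simplified]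
    G_anti[OF graph P7free C4free gemfree hole ra_2_0_3, simplified]
    G_anti[OF graph P7free C4free gemfree hole ra_2_0_5, simplified]
    G_anti[OF graph P7free C4free gemfree hole ra_2_1_0, simplified]
    G_anti[OF graph P7free C4free gemfree hole ra_2_1_1, simplified]
    G_anti[OF graph P7free C4free gemfree hole ra_2_1_4, simplified]
    G_anti[OF graph P7free C4free gemfree hole ra_2_1_5, simplified]
  have cl: "is_clique V E (Tset V E v 0 i \<union> Tset V E v 2 i)" for i
  proof -
    have "Tset V E v 0 i = {} \<or> Tset V E v 2 i = {}" using G_never[OF graph P7free C4free gemfree hole rn_0_2_0, of i, simplified] by simp
    then show ?thesis using G_clq[OF graph P7free C4free gemfree hole rq_0, of i] G_clq[OF graph P7free C4free gemfree hole rq_2, of i] by auto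
  qed
  have d1: "Tset V E v 0 i = {} \<or> Tset V E v 0 (i+2) \<union> Tset V E v 0 (i+5) = {}" for i
    using G_never[OF graph P7free C4free gemfree hole rn_0_0_2, of i, simplified] G_never[OF graph P7free C4free gemfree hole rn_0_0_5, of i, simplified] by auto
  have f1: "Tset V E v 2 i = {} \<or> Tset V E v 2 (i+3) \<union> Tset V E v 2 (i+4) = {}" for i
    using G_never[OF graph P7free C4free gemfree hole rn_2_2_3, of i, simplified] G_never[OF graph P7free C4free gemfree hole rn_2_2_4, of i, simplified] by auto
  have g1: "Tset V E v 2 i = {} \<or> Tset V E v 0 i \<union> Tset V E v 0 (i+4) \<union> Tset V E v 0 (i+6) = {}" for i
    using G_never[OF graph P7free C4free gemfree hole rn_2_0_0, of i, simplified] G_never[OF graph P7free C4free gemfree hole rn_2_0_4, of i, simplified] G_never[OF graph P7free C4free gemfree hole rn_2_0_6, of i, simplified] by auto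
  show ?thesis unfolding A_def X_def Y_def Z_def eqX eqY eqZ
    using pa cl d1 f1 g1 G_clq[OF graph P7free C4free gemfree hole rq_1] F by (simp add: complete_to_Un anticomplete_to_Un)
qed

end
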